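(* Consider the online execution scheduling algorithm OES (described in the context) applied to a distributed GNN training job with a fixed task placement. Then at every time step $t$ and for every machine $m\in\{1,\dots,M\}$, the ingress flow degree satisfies $\Delta^m_{in}\le \widehat{\Delta^m_{in}}$ and the egress flow degree satisfies $\Delta^m_{out}\le \widehat{\Delta^m_{out}}$.
   Context: Setting (distributed GNN training job). There are $M$ machines; machine $m$ has available incoming bandwidth $B^m_{in}$ and outgoing bandwidth $B^m_{out}$. The set of tasks is $J=J_g\cup J_s\cup J_w\cup J_{ps}$ (graph store servers, samplers, workers, parameter servers (PSs)); each worker has an associated set of samplers. A fixed placement assigns each task $j$ to exactly one machine ($y^m_j=1$ iff $j$ is on machine $m$). Training runs for $N$ iterations in discrete time steps $t=1,2,\dots$; task $j$ takes execution time $p_j$ in every iteration; $(j,n)$ denotes task $j$ in iteration $n$. Successor relation $succ(j,n)$: $(s,n)\in succ(g,n)$ for every graph store server $g$ and sampler $s$; $(w,n)\in succ(s,n)$ for every sampler $s$ and its associated worker $w$; $(ps,n)\in succ(w,n)$ for every worker $w$ and PS $ps$; $(w,n+1)\in succ(ps,n)$ for every PS $ps$ and worker $w$. For each $(j',n')\in succ(j,n)$ with $j,j'$ on different machines there is a flow $(j,n)\to(j',n')$ of data volume $d_{(j,n)\to(j',n')}$, which may only start after $(j,n)$ finishes, must finish before $(j',n')$ starts, and (inter-iteration dependency) may not start before the flow $(j,n-1)\to(j',n'-1)$ has finished. Also $(j,n+1)$ may start only after $(j,n)$ finishes, and if $j,j'$ are on the same machine, $(j',n')$ may start only after $(j,n)$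 finishes (no transfer needed). Algorithm OES. It maintains a set $F_{act}$ of active flows (started but unfinished) and a set $F_{pend}$ of pending flows (whose source task is finished but whose previous-iteration counterpart $(j,n-1)\to(j',n'-1)$ has not finished). At $t=1$ all graph store servers of iteration 1 start. At each time step $t$: every task $(j,n)$ whose dependencies are all satisfied (all required data received, previous iteration of $j$ done) starts; for every task $(j,n)$ that finished at $t-1$ and every inter-machine flow $(j,n)\to(j',n')$ out of it, the flow is added to $F_{pend}$ if $(j,n-1)\to(j',n'-1)\in F_{act}\cup F_{pend}$, and to $F_{act}$ otherwise; for every flow $(j,n)\to(j',n')$ that finished at $t-1$, if $(j,n+1)\to(j',n'+1)\in F_{pend}$ it is moved to $F_{act}$. Then, with $\Delta^m_{in}$ (resp. $\Delta^m_{out}$) the number of flows in $F_{act}$ whose destination (resp. source) task is on machine $m$, every active flow from a task on machine $m$ to a task on machine $m'$ transmits $\min\{B^{m'}_{in}/\Delta^{m'}_{in},\,B^m_{out}/\Delta^m_{out}\}$ data units at time $t$. One-iteration degrees. Let $F_{one\_iter}$ be the set of all inter-machine flows of one training iteration (including the transfers of parameters updated by the PSs in that iteration to the workers). $\widehat{\Delta^m_{in}}$ (resp. $\widehat{\Delta^m_{out}}$) is the number of flows in $F_{one\_iter}$ whose destination (resp. source) task is placed on machine $m$. *)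

theory Defs
  imports Main "HOL.Real"
begin

datatype task_kind = GraphStore | Sampler | Worker | PServer

text \<open>Flows are triples (j, j', n): the flow from task j in iteration n to task j'
  in iteration n + ioff j j' (offset 1 exactly for PS-to-worker transfers).\<close>
type_synonym 'j flow = "'j \<times> 'j \<times> nat"

record 'j job =
  jb_tasks  :: "'j set"
  jb_kind   :: "'j \<Rightarrow> task_kind"
  jb_assoc  :: "'j \<Rightarrow> 'j \<Rightarrow> bool"
  jb_M      :: nat
  jb_place  :: "'j \<Rightarrow> nat"              \<comment> \<open>y^m_j = 1 iff place j = m\<close>
  jb_ptime  :: "'j \<Rightarrow> nat"
  jb_vol    :: "'j flow \<Rightarrow> real"
  jb_Bin    :: "nat \<Rightarrow> real"
  jb_Bout   :: "nat \<Rightarrow> real"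
  jb_N      :: nat

definition wf_job :: "'j job \<Rightarrow> bool" where
  "wf_job G \<longleftrightarrow> finite (jb_tasks G)
     \<and> (\<forall>j\<in>jb_tasks G. jb_place G j \<in> {1..jb_M G} \<and> jb_ptime G j > 0)
     \<and> (\<forall>m\<in>{1..jb_M G}. jb_Bin G m > 0 \<and> jb_Bout G m > 0)
     \<and> (\<forall>f. jb_vol G f \<ge> 0)"

definition edge :: "'j job \<Rightarrow> 'j \<Rightarrow> 'j \<Rightarrow> bool" where
  "edge G j j' \<longleftrightarrow> j \<in> jb_tasks G \<and> j' \<in> jb_tasks G \<and>
     ((jb_kind G j = GraphStore \<and> jb_kind G j' = Sampler) \<or>
      (jb_kind G j = Sampler \<and> jb_kind G j' = Worker \<and> jb_assoc G j j') \<or>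
      (jb_kind G j = Worker \<and> jb_kind G j' = PServer) \<or>
      (jb_kind G j = PServer \<and> jb_kind G j' = Worker))"

definition ioff :: "'j job \<Rightarrow> 'j \<Rightarrow> 'j \<Rightarrow> nat" where
  "ioff G j j' = (if jb_kind G j = PServer \<and> jb_kind G j' = Worker then 1 else 0)"

definition interm :: "'j job \<Rightarrow> 'j \<Rightarrow> 'j \<Rightarrow> bool" where
  "interm G j j' \<longleftrightarrow> edge G j j' \<and> jb_place G j \<noteq> jb_place G j'"

definition is_flow :: "'j job \<Rightarrow> 'j flow \<Rightarrow> bool" where
  "is_flow G f = (case f of (j, j', n) \<Rightarrow>
      interm G j j' \<and> 1 \<le> n \<and> n + ioff G j j' \<le> jb_N G)"

definition fsrc :: "'j flow \<Rightarrow> 'j \<times> nat" where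
  "fsrc f = (case f of (j, j', n) \<Rightarrow> (j, n))"

definition prevf :: "'j flow \<Rightarrow> 'j flow" where
  "prevf f = (case f of (j, j', n) \<Rightarrow> (j, j', n - 1))"

definition src_mach :: "'j job \<Rightarrow> 'j flow \<Rightarrow> nat" where
  "src_mach G f = jb_place G (fst f)"

definition dst_mach :: "'j job \<Rightarrow> 'j flow \<Rightarrow> nat" where
  "dst_mach G f = jb_place G (fst (snd f))"

text \<open>State after time step t: start times of task instances, cumulative data sent,
  finish times of flows, F_act as used for transmission at step t (before removing the
  flows that finished at t), and F_pend.\<close>
record 'j oes_state =
  started :: "'j \<times> nat \<Rightarrow> nat option"
  sent    :: "'j flow \<Rightarrow> real"
  ffin    :: "'j flow \<Rightarrow> nat option"
  act     :: "'j flow set"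
  pend    :: "'j flow set"

definition oes_init :: "'j oes_state" where
  "oes_init = \<lparr>started = (\<lambda>_. None), sent = (\<lambda>_. 0), ffin = (\<lambda>_. None),
               act = {}, pend = {}\<rparr>"

text \<open>A task instance started at step s runs during steps s, ..., s + p_j - 1 and
  finishes at step s + p_j - 1.\<close>
definition task_done_by :: "'j job \<Rightarrow> 'j oes_state \<Rightarrow> 'j \<times> nat \<Rightarrow> nat \<Rightarrow> bool" where
  "task_done_by G \<sigma> x t \<longleftrightarrow> (\<exists>s. started \<sigma> x = Some s \<and> s + jb_ptime G (fst x) \<le> t + 1)"

definition task_fin_at :: "'j job \<Rightarrow> 'j oes_state \<Rightarrow> 'j \<times> nat \<Rightarrow> nat \<Rightarrow> bool" where
  "task_fin_at G \<sigma> x t \<longleftrightarrow> (\<exists>s. started \<sigma> x = Some s \<and> s + jb_ptime G (fst x) = t + 1)"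

text \<open>Task (j,n) may start at step t (given the state after step t-1).\<close>
definition ready :: "'j job \<Rightarrow> 'j oes_state \<Rightarrow> nat \<Rightarrow> 'j \<times> nat \<Rightarrow> bool" where
  "ready G \<sigma> t x = (case x of (j, n) \<Rightarrow>
      j \<in> jb_tasks G \<and> 1 \<le> n \<and> n \<le> jb_N G \<and> started \<sigma> (j, n) = None \<and>
      (n = 1 \<or> task_done_by G \<sigma> (j, n - 1) (t - 1)) \<and>
      (\<forall>i. edge G i j \<and> ioff G i j < n \<longrightarrow>
         (if jb_place G i = jb_place G j
          then task_done_by G \<sigma> (i, n - ioff G i j) (t - 1)
          else ffin \<sigma> (i, j, n - ioff G i j) \<noteq> None)))"

definition oes_step :: "'j job \<Rightarrow> 'j oes_state \<Rightarrow> nat \<Rightarrow> 'j oes_state" where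
  "oes_step G \<sigma> t = (
     let st1 = (\<lambda>x. if ready G \<sigma> t x then Some t else started \<sigma> x);
         A = {f \<in> act \<sigma>. ffin \<sigma> f = None};
         P = pend \<sigma>;
         new = {f. is_flow G f \<and> task_fin_at G \<sigma> (fsrc f) (t - 1)};
         moved = {f \<in> P. ffin \<sigma> (prevf f) = Some (t - 1)};
         act1 = A \<union> moved \<union> {f \<in> new. prevf f \<notin> A \<union> P};
         pend1 = (P - moved) \<union> {f \<in> new. prevf f \<in> A \<union> P};
         din = (\<lambda>m. card {g \<in> act1. dst_mach G g = m});
         dout = (\<lambda>m. card {g \<in> act1. src_mach G g = m});
         rate = (\<lambda>f. min (jb_Bin G (dst_mach G f) / real (din (dst_mach G f)))
                         (jb_Bout G (src_mach G f) / real (dout (src_mach G f))));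
         sent1 = (\<lambda>f. if f \<in> act1 then sent \<sigma> f + rate f else sent \<sigma> f);
         ffin1 = (\<lambda>f. if f \<in> act1 \<and> jb_vol G f \<le> sent1 f then Some t else ffin \<sigma> f)
     in \<lparr>started = st1, sent = sent1, ffin = ffin1, act = act1, pend = pend1\<rparr>)"

fun oes_run :: "'j job \<Rightarrow> nat \<Rightarrow> 'j oes_state" where
  "oes_run G 0 = oes_init"
| "oes_run G (Suc t) = oes_step G (oes_run G t) (Suc t)"

definition Delta_in :: "'j job \<Rightarrow> nat \<Rightarrow> nat \<Rightarrow> nat" where
  "Delta_in G t m = card {f \<in> act (oes_run G t). dst_mach G f = m}"

definition Delta_out :: "'j job \<Rightarrow> nat \<Rightarrow> nat \<Rightarrow> nat" where
  "Delta_out G t m = card {f \<in> act (oes_run G t). src_mach G f = m}"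

text \<open>One-iteration degrees: F_one_iter contains one flow per inter-machine successor
  pair (j, j') (including PS-to-worker parameter transfers).\<close>
definition hat_Delta_in :: "'j job \<Rightarrow> nat \<Rightarrow> nat" where
  "hat_Delta_in G m = card {(j, j'). interm G j j' \<and> jb_place G j' = m}"

definition hat_Delta_out :: "'j job \<Rightarrow> nat \<Rightarrow> nat" where
  "hat_Delta_out G m = card {(j, j'). interm G j j' \<and> jb_place G j = m}"

end

theory Submission
  imports Defs
begin

lemma fsrc_simp[simp]: "fsrc (j,j',n) = (j,n)" by (simp add: fsrc_def)
lemma prevf_simp[simp]: "prevf (j,j',n) = (j,j',n-1)" by (simp add: prevf_def)
lemma is_flow_simp: "is_flow G (j,j',n) = (interm G j j' \<and> 1 \<le> n \<and> n + ioff G j j' \<le> jb_N G)"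
  by (simp add: is_flow_def)

lemma is_flow_le: "is_flow G (j,j',k') \<Longrightarrow> 1 \<le> k \<Longrightarrow> k \<le> k' \<Longrightarrow> is_flow G (j,j',k)"
  by (auto simp: is_flow_simp)

lemma is_flow_ptime: "wf_job G \<Longrightarrow> is_flow G (j,j',k) \<Longrightarrow> jb_ptime G j > 0"
  by (auto simp: is_flow_simp interm_def edge_def wf_job_def)

definition dn :: "'j job \<Rightarrow> 'j oes_state \<Rightarrow> 'j \<times> nat \<Rightarrow> nat \<Rightarrow> bool" where
  "dn G \<sigma> x T \<longleftrightarrow> (\<exists>s. started \<sigma> x = Some s \<and> s + jb_ptime G (fst x) \<le> T)"

definition "I1 G \<sigma> \<equiv> \<forall>f \<in> act \<sigma> \<union> pend \<sigma>. is_flow G f"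
definition "I2 G \<sigma> T \<equiv> \<forall>f \<in> act \<sigma> \<union> pend \<sigma>. dn G \<sigma> (fsrc f) T"
definition "I3 G \<sigma> T \<equiv> \<forall>f. is_flow G f \<and> dn G \<sigma> (fsrc f) T \<longrightarrow> f \<in> act \<sigma> \<union> pend \<sigma> \<or> ffin \<sigma> f \<noteq> None"
definition "I4 \<sigma> \<equiv> \<forall>f \<in> pend \<sigma>. ffin \<sigma> f = None \<and> prevf f \<in> act \<sigma> \<union> pend \<sigma>"
definition "I5 \<sigma> T \<equiv> \<forall>f \<in> act \<sigma>. ffin \<sigma> f = None \<or> ffin \<sigma> f = Some T"
definition "I6 G \<sigma> \<equiv> \<forall>j j' k k'. ffin \<sigma> (j,j',k') \<noteq> None \<and> k < k' \<and> is_flow G (j,j',k) \<longrightarrow> ffin \<sigma> (j,j',k) \<noteq> None"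
definition "I7 \<sigma> \<equiv> \<forall>j j' k k'. (j,j',k) \<in> act \<sigma> \<and> (j,j',k') \<in> act \<sigma> \<longrightarrow> k = k'"
definition "I9 G \<sigma> \<equiv> \<forall>j n k s. started \<sigma> (j,n) = Some s \<and> 1 \<le> k \<and> k < n \<longrightarrow> (\<exists>s'. started \<sigma> (j,k) = Some s' \<and> s' + jb_ptime G j \<le> s)"
definition "I10 G \<sigma> \<equiv> \<forall>j j' k k'. (j,j',k') \<in> act \<sigma> \<and> k < k' \<and> is_flow G (j,j',k) \<longrightarrow> ffin \<sigma> (j,j',k) \<noteq> None"
definition "I12 G \<sigma> T \<equiv> \<forall>f. ffin \<sigma> f \<noteq> None \<longrightarrow> dn G \<sigma> (fsrc f) T"

definition "I11 \<sigma> \<equiv> act \<sigma> \<inter> pend \<sigma> = {}"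

definition "INV G \<sigma> T \<equiv> I11 \<sigma> \<and> I1 G \<sigma> \<and> I2 G \<sigma> T \<and> I3 G \<sigma> T \<and> I4 \<sigma> \<and> I5 \<sigma> T \<and> I6 G \<sigma> \<and> I7 \<sigma> \<and> I9 G \<sigma> \<and> I10 G \<sigma> \<and> I12 G \<sigma> T"

lemma INV_init: "INV G oes_init 0"
  by (simp add: INV_def I1_def I2_def I3_def I4_def I5_def I6_def I7_def I9_def I10_def I11_def I12_def oes_init_def dn_def)

lemma step_started: "started (oes_step G \<sigma> t) = (\<lambda>x. if ready G \<sigma> t x then Some t else started \<sigma> x)"
  by (simp add: oes_step_def Let_def)
lemma step_act: "act (oes_step G \<sigma> t) =
   {f \<in> act \<sigma>. ffin \<sigma> f = None} \<union> {f \<in> pend \<sigma>. ffin \<sigma> (prevf f) = Some (t - 1)} \<union>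
   {f \<in> {f. is_flow G f \<and> task_fin_at G \<sigma> (fsrc f) (t - 1)}. prevf f \<notin> {f \<in> act \<sigma>. ffin \<sigma> f = None} \<union> pend \<sigma>}"
  by (simp add: oes_step_def Let_def)
lemma step_pend: "pend (oes_step G \<sigma> t) =
   (pend \<sigma> - {f \<in> pend \<sigma>. ffin \<sigma> (prevf f) = Some (t - 1)}) \<union>
   {f \<in> {f. is_flow G f \<and> task_fin_at G \<sigma> (fsrc f) (t - 1)}. prevf f \<in> {f \<in> act \<sigma>. ffin \<sigma> f = None} \<union> pend \<sigma>}"
  by (simp add: oes_step_def Let_def)
lemma step_ffin: "\<exists>c. ffin (oes_step G \<sigma> t) = (\<lambda>f. if f \<in> act (oes_step G \<sigma> t) \<and> c f then Some t else ffin \<sigma> f)"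
  by (rule exI, simp add: oes_step_def Let_def)


lemma I9D: "I9 G \<sigma> \<Longrightarrow> started \<sigma> (j,n) = Some s \<Longrightarrow> 1 \<le> k \<Longrightarrow> k < n \<Longrightarrow>
   \<exists>s'. started \<sigma> (j,k) = Some s' \<and> s' + jb_ptime G j \<le> s"
  unfolding I9_def by blast
lemma I7D: "I7 \<sigma> \<Longrightarrow> (j,j',k) \<in> act \<sigma> \<Longrightarrow> (j,j',k') \<in> act \<sigma> \<Longrightarrow> k = k'"
  unfolding I7_def by blast

lemma I6D: "I6 G \<sigma> \<Longrightarrow> ffin \<sigma> (j,j',k') \<noteq> None \<Longrightarrow> k < k' \<Longrightarrow> is_flow G (j,j',k) \<Longrightarrow> ffin \<sigma> (j,j',k) \<noteq> None"
  unfolding I6_def by blast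

lemma INV_step:
  assumes wf: "wf_job G" and inv: "INV G \<sigma> t"
  shows "INV G (oes_step G \<sigma> (Suc t)) (Suc t)"
proof -
  define \<sigma>' where "\<sigma>' = oes_step G \<sigma> (Suc t)"
  define A where "A = {f \<in> act \<sigma>. ffin \<sigma> f = None}"
  define P where "P = pend \<sigma>"
  define new where "new = {f. is_flow G f \<and> task_fin_at G \<sigma> (fsrc f) t}"
  define Mv where "Mv = {f \<in> P. ffin \<sigma> (prevf f) = Some t}"
  define Nw where "Nw = {f \<in> new. prevf f \<notin> A \<union> P}"
  let ?p = "jb_ptime G"
  from inv have i1: "I1 G \<sigma>" and i2: "I2 G \<sigma> t" and i3: "I3 G \<sigma> t" and i4: "I4 \<sigma>"
    and i5: "I5 \<sigma> t" and i6: "I6 G \<sigma>" and i7: "I7 \<sigma>" and i9: "I9 G \<sigma>" and i10: "I10 G \<sigma>"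
    and i12: "I12 G \<sigma> t" and i11: "I11 \<sigma>" by (auto simp: INV_def)
  have actE: "act \<sigma>' = A \<union> Mv \<union> Nw"
    unfolding \<sigma>'_def step_act A_def Mv_def Nw_def new_def P_def by simp
  have pendE: "pend \<sigma>' = (P - Mv) \<union> {f \<in> new. prevf f \<in> A \<union> P}"
    unfolding \<sigma>'_def step_pend A_def Mv_def Nw_def new_def P_def by simp
  obtain c where ffE: "ffin \<sigma>' = (\<lambda>f. if f \<in> act \<sigma>' \<and> c f then Some (Suc t) else ffin \<sigma> f)"
    using step_ffin[of G \<sigma> "Suc t"] unfolding \<sigma>'_def by blast
  have stE: "started \<sigma>' = (\<lambda>x. if ready G \<sigma> (Suc t) x then Some (Suc t) else started \<sigma> x)"
    unfolding \<sigma>'_def step_started by simp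
  have st_keep: "started \<sigma>' x = Some s" if "started \<sigma> x = Some s" for x s
    using that unfolding stE by (cases x) (auto simp: ready_def)
  have st_new: "started \<sigma> x = Some s \<or> (s = Suc t \<and> ready G \<sigma> (Suc t) x)" if "started \<sigma>' x = Some s" for x s
    using that unfolding stE by (auto split: if_splits)
  have ff_keep: "ffin \<sigma>' f \<noteq> None" if "ffin \<sigma> f \<noteq> None" for f
    using that unfolding ffE by auto
  have ff_new: "ffin \<sigma> f \<noteq> None \<or> (f \<in> act \<sigma>' \<and> ffin \<sigma>' f = Some (Suc t))" if "ffin \<sigma>' f \<noteq> None" for f
    using that unfolding ffE by (auto split: if_splits)
  have ff_out: "ffin \<sigma>' f = ffin \<sigma> f" if "f \<notin> act \<sigma>'" for f
    using that unfolding ffE by auto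
  have ff_in: "ffin \<sigma>' f = ffin \<sigma> f \<or> ffin \<sigma>' f = Some (Suc t)" for f
    unfolding ffE by auto
  have dn_keep: "dn G \<sigma>' x T'" if "dn G \<sigma> x T" "T \<le> T'" for x T T'
    using that st_keep unfolding dn_def by fastforce
  have newE: "\<exists>s. started \<sigma> (j,n) = Some s \<and> s + ?p j = Suc t" if "(j,j',n) \<in> new" for j j' n
    using that unfolding new_def task_fin_at_def by auto
  have new_flow: "is_flow G f" if "f \<in> new" for f using that unfolding new_def by auto
  have dnE: "\<exists>s. started \<sigma> (j,n) = Some s \<and> s + ?p j \<le> t" if "dn G \<sigma> (j,n) t" for j n
    using that unfolding dn_def by auto
  have ord: "sk + ?p j \<le> sn" if "started \<sigma> (j,n) = Some sn" "started \<sigma> (j,k) = Some sk" "1 \<le> k" "k < n" for j n k sn sk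
    using i9 that unfolding I9_def by fastforce
  have ord_new: "n < k" if h1: "dn G \<sigma> (j,n) t" and h2: "(j,j',k) \<in> new" and h3: "1 \<le> n" for j j' n k
  proof -
    obtain sn where sn: "started \<sigma> (j,n) = Some sn" "sn + ?p j \<le> t" using dnE[OF h1] by blast
    obtain sk where sk: "started \<sigma> (j,k) = Some sk" "sk + ?p j = Suc t" using newE[OF h2] by blast
    have "k \<ge> 1" using new_flow[OF h2] by (simp add: is_flow_simp)
    show ?thesis
    proof (rule ccontr)
      assume "\<not> n < k"
      then consider "n = k" | "k < n" by linarith
      then show False
      proof cases
        case 1 then show ?thesis using sn sk by simp
      next
        case 2 then show ?thesis using ord[OF sn(1) sk(1) \<open>k \<ge> 1\<close>] sn sk by linarith
      qed
    qed
  qed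
  have new_prev_dn: "dn G \<sigma> (j,k-1) t" if h1: "(j,j',k) \<in> new" and h2: "2 \<le> k" for j j' k
  proof -
    obtain sk where sk: "started \<sigma> (j,k) = Some sk" "sk + ?p j = Suc t" using newE[OF h1] by blast
    have "?p j > 0" using is_flow_ptime[OF wf new_flow[OF h1]] .
    have kk: "1 \<le> k-1" "k-1 < k" using h2 by auto
    obtain s' where "started \<sigma> (j,k-1) = Some s'" "s' + ?p j \<le> sk"
      using I9D[OF i9 sk(1) kk] by blast
    then show ?thesis unfolding dn_def using sk \<open>?p j > 0\<close> by auto
  qed
  have new_not_old: "False" if "(j,j',n) \<in> new" "dn G \<sigma> (j,n) t" for j j' n
    using newE[OF that(1)] dnE[OF that(2)] by auto
  have prev_fin: "ffin \<sigma> (j,j',k-1) \<noteq> None" if "(j,j',k) \<in> Mv \<union> Nw" "2 \<le> k" for j j' k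
    using that(1)
  proof
    assume "(j,j',k) \<in> Mv" then show ?thesis unfolding Mv_def by auto
  next
    assume nw: "(j,j',k) \<in> Nw"
    then have nn: "(j,j',k) \<in> new" "(j,j',k-1) \<notin> A \<union> P" unfolding Nw_def by auto
    have "is_flow G (j,j',k-1)" using is_flow_le[OF new_flow[OF nn(1)], of "k-1"] that(2) by simp
    with new_prev_dn[OF nn(1) that(2)] i3 have "(j,j',k-1) \<in> act \<sigma> \<union> pend \<sigma> \<or> ffin \<sigma> (j,j',k-1) \<noteq> None"
      unfolding I3_def by fastforce
    then show ?thesis using nn(2) unfolding A_def P_def by auto
  qed
  have below_fin: "ffin \<sigma> (j,j',k) \<noteq> None" if "ffin \<sigma> (j,j',k'') \<noteq> None" "k \<le> k''" "is_flow G (j,j',k)" for j j' k k''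
    using that I6D[OF i6, of j j' k'' k] by (cases "k = k''") auto
  have MvNw_flow: "is_flow G f" if "f \<in> Mv \<union> Nw" for f
    using that i1 unfolding Mv_def Nw_def P_def I1_def new_def by auto
  have A_flow: "is_flow G f" if "f \<in> A" for f
    using that i1 unfolding A_def I1_def by auto
  have AP_flow: "is_flow G f" if "f \<in> A \<union> P" for f
    using that i1 unfolding A_def P_def I1_def by auto
  have AP_dn: "dn G \<sigma> (fsrc f) t" if "f \<in> A \<union> P" for f
    using that i2 unfolding A_def P_def I2_def by auto
  have Mv_prev_act: "prevf f \<in> act \<sigma> \<and> ffin \<sigma> (prevf f) = Some t" if "f \<in> Mv" for f
  proof -
    have "f \<in> pend \<sigma>" "ffin \<sigma> (prevf f) = Some t" using that unfolding Mv_def P_def by auto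
    moreover have "prevf f \<in> act \<sigma> \<union> pend \<sigma>" using i4 \<open>f \<in> pend \<sigma>\<close> unfolding I4_def by blast
    moreover have "prevf f \<in> pend \<sigma> \<Longrightarrow> ffin \<sigma> (prevf f) = None" using i4 unfolding I4_def by blast
    ultimately show ?thesis by auto
  qed
  have c4: False if "(j,j',n) \<in> A \<union> P" "ffin \<sigma> (j,j',n) = None" "(j,j',k) \<in> Nw" for j j' n k
  proof -
    have nf: "(j,j',k) \<in> new" using that(3) unfolding Nw_def by auto
    have fl: "is_flow G (j,j',n)" using AP_flow[OF that(1)] .
    then have n1: "1 \<le> n" by (simp add: is_flow_simp)
    have "n < k" using ord_new[OF AP_dn[OF that(1), simplified] nf n1] .
    then have k2: "2 \<le> k" using n1 by linarith
    have "ffin \<sigma> (j,j',k-1) \<noteq> None" using prev_fin[OF _ k2] that(3) by blast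
    moreover have "n \<le> k-1" using \<open>n < k\<close> by linarith
    ultimately show False using below_fin[of j j' "k-1" n] fl that(2) by blast
  qed
  have c6: "n = k" if h1: "(j,j',n) \<in> new" and h2: "(j,j',k) \<in> new" for j j' n k
  proof (rule ccontr)
    assume ne: "n \<noteq> k"
    obtain sn where sn: "started \<sigma> (j,n) = Some sn" "sn + ?p j = Suc t" using newE[OF h1] by blast
    obtain sk where sk: "started \<sigma> (j,k) = Some sk" "sk + ?p j = Suc t" using newE[OF h2] by blast
    have "?p j > 0" using is_flow_ptime[OF wf new_flow[OF h1]] .
    have "1 \<le> n" "1 \<le> k" using new_flow[OF h1] new_flow[OF h2] by (auto simp: is_flow_simp)
    show False
    proof (cases "n < k")
      case True then show ?thesis using ord[OF sk(1) sn(1) \<open>1 \<le> n\<close>] sn sk \<open>?p j > 0\<close> by linarith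
    next
      case False then have "k < n" using ne by linarith
      then show ?thesis using ord[OF sn(1) sk(1) \<open>1 \<le> k\<close>] sn sk \<open>?p j > 0\<close> by linarith
    qed
  qed
  have c2: False if "(j,j',n) \<in> A" "(j,j',k) \<in> Mv" for j j' n k
  proof -
    have "(j,j',k-1) \<in> act \<sigma>" "ffin \<sigma> (j,j',k-1) = Some t" using Mv_prev_act[OF that(2)] by auto
    moreover have "(j,j',n) \<in> act \<sigma>" "ffin \<sigma> (j,j',n) = None" using that(1) unfolding A_def by auto
    ultimately show False using I7D[OF i7, of j j' n "k-1"] by auto
  qed
  have c3: "n = k" if "(j,j',n) \<in> Mv" "(j,j',k) \<in> Mv" for j j' n k
  proof -
    have "(j,j',k-1) \<in> act \<sigma>" "(j,j',n-1) \<in> act \<sigma>" using Mv_prev_act that by auto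
    then have "n - 1 = k - 1" using I7D[OF i7, of j j' "n-1" "k-1"] by auto
    moreover have "is_flow G (j,j',n)" "is_flow G (j,j',k)" using MvNw_flow that by auto
    then have "1 \<le> n" "1 \<le> k" by (auto simp: is_flow_simp)
    ultimately show ?thesis by linarith
  qed
  have n7: "I7 \<sigma>'"
    unfolding I7_def
  proof (intro allI impI)
    fix j j' n k assume h: "(j,j',n) \<in> act \<sigma>' \<and> (j,j',k) \<in> act \<sigma>'"
    have AA: "n = k" if "(j,j',n) \<in> A" "(j,j',k) \<in> A" for n k using that i7 unfolding A_def I7_def by auto
    have Anf: "ffin \<sigma> f = None" if "f \<in> A \<union> P" for f using that i4 unfolding A_def P_def I4_def by auto
    have MP: "f \<in> P" if "f \<in> Mv" for f using that unfolding Mv_def by auto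
    have Nn: "f \<in> new" if "f \<in> Nw" for f using that unfolding Nw_def by auto
    have hn: "(j,j',n) \<in> A \<union> Mv \<union> Nw" and hk: "(j,j',k) \<in> A \<union> Mv \<union> Nw" using h actE by auto
    have AP: "f \<in> A \<union> P" if "f \<in> A \<or> f \<in> Mv" for f using that MP by blast
    show "n = k"
    proof (cases "(j,j',n) \<in> Nw")
      case True
      show ?thesis
      proof (cases "(j,j',k) \<in> Nw")
        case True then show ?thesis using c6 Nn \<open>(j,j',n) \<in> Nw\<close> by blast
      next
        case False then have "(j,j',k) \<in> A \<union> P" using hk AP by blast
        then show ?thesis using c4[OF _ Anf True] by blast
      qed
    next
      case False
      then have nAP: "(j,j',n) \<in> A \<union> P" using hn AP by blast
      show ?thesis
      proof (cases "(j,j',k) \<in> Nw")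
        case True then show ?thesis using c4[OF nAP Anf[OF nAP] True] by blast
      next
        case False
        then consider "(j,j',n) \<in> A" "(j,j',k) \<in> A" | "(j,j',n) \<in> A" "(j,j',k) \<in> Mv"
          | "(j,j',n) \<in> Mv" "(j,j',k) \<in> A" | "(j,j',n) \<in> Mv" "(j,j',k) \<in> Mv"
          using hn hk \<open>(j,j',n) \<notin> Nw\<close> by blast
        then show ?thesis using AA c2 c3 by cases blast+
      qed
    qed
  qed
  have P_none: "ffin \<sigma> f = None" if "f \<in> P" for f using that i4 unfolding P_def I4_def by blast
  have new_none: "ffin \<sigma> f = None" if "f \<in> new" for f
  proof (rule ccontr)
    assume "ffin \<sigma> f \<noteq> None"
    then have "dn G \<sigma> (fsrc f) t" using i12 unfolding I12_def by blast
    then show False using that new_not_old by (cases f) auto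
  qed
  have new_notAP: "f \<notin> A \<union> P" if "f \<in> new" for f
    using that AP_dn new_not_old by (cases f) fastforce
  have sub: "act \<sigma>' \<union> pend \<sigma>' \<subseteq> A \<union> P \<union> new"
    using actE pendE unfolding Mv_def Nw_def by auto
  have n1: "I1 G \<sigma>'" unfolding I1_def using sub AP_flow new_flow by blast
  have new_dn: "dn G \<sigma>' (fsrc f) (Suc t)" if "f \<in> new" for f
  proof -
    obtain j j' n where f: "f = (j,j',n)" by (cases f)
    then show ?thesis using newE[of j j' n] that st_keep unfolding dn_def by fastforce
  qed
  have n2: "I2 G \<sigma>' (Suc t)" unfolding I2_def
  proof
    fix f assume "f \<in> act \<sigma>' \<union> pend \<sigma>'"
    then have "f \<in> A \<union> P \<or> f \<in> new" using sub by blast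
    then show "dn G \<sigma>' (fsrc f) (Suc t)"
    proof
      assume "f \<in> A \<union> P" then show ?thesis using AP_dn dn_keep[of "fsrc f" t "Suc t"] by simp
    next
      assume "f \<in> new" then show ?thesis using new_dn by blast
    qed
  qed
  have n11: "I11 \<sigma>'" unfolding I11_def pendE actE
  proof -
    have "A \<inter> P = {}" using i11 unfolding I11_def A_def P_def by blast
    moreover have "Mv \<subseteq> P" "Nw \<subseteq> new" unfolding Mv_def Nw_def by auto
    ultimately show "(A \<union> Mv \<union> Nw) \<inter> (P - Mv \<union> {f \<in> new. prevf f \<in> A \<union> P}) = {}"
      using new_notAP unfolding Nw_def by blast
  qed
  have n3: "I3 G \<sigma>' (Suc t)" unfolding I3_def
  proof (intro allI impI)
    fix f assume h: "is_flow G f \<and> dn G \<sigma>' (fsrc f) (Suc t)"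
    obtain j j' n where f: "f = (j,j',n)" by (cases f)
    have p0: "?p j > 0" using is_flow_ptime[OF wf] h f by blast
    obtain s where s: "started \<sigma>' (j,n) = Some s" "s + ?p j \<le> Suc t" using h f unfolding dn_def by auto
    have "s \<noteq> Suc t" using s p0 by linarith
    then have s0: "started \<sigma> (j,n) = Some s" using st_new[OF s(1)] by blast
    show "f \<in> act \<sigma>' \<union> pend \<sigma>' \<or> ffin \<sigma>' f \<noteq> None"
    proof (cases "s + ?p j \<le> t")
      case True
      then have "dn G \<sigma> (fsrc f) t" using s0 f unfolding dn_def by auto
      then have "f \<in> act \<sigma> \<union> pend \<sigma> \<or> ffin \<sigma> f \<noteq> None" using i3 h unfolding I3_def by blast
      then show ?thesis using ff_keep actE pendE unfolding A_def P_def by blast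
    next
      case False
      then have "f \<in> new" using s0 s h f unfolding new_def task_fin_at_def by auto
      then show ?thesis using actE pendE unfolding Nw_def by blast
    qed
  qed
  have act_none: "ffin \<sigma> f = None" if "f \<in> act \<sigma>' \<union> pend \<sigma>'" for f
    using that sub P_none new_none unfolding A_def by blast
  have n4: "I4 \<sigma>'" unfolding I4_def
  proof
    fix f assume fp: "f \<in> pend \<sigma>'"
    then have "f \<notin> act \<sigma>'" using n11 unfolding I11_def by blast
    then have ff: "ffin \<sigma>' f = None" using ff_out act_none fp by auto
    from fp[unfolded pendE] have "prevf f \<in> act \<sigma>' \<union> pend \<sigma>'"
    proof
      assume f1: "f \<in> P - Mv"
      then have "prevf f \<in> act \<sigma> \<union> pend \<sigma>" using i4 unfolding I4_def P_def by blast
      moreover have "prevf f \<in> act \<sigma> \<Longrightarrow> ffin \<sigma> (prevf f) = None \<or> ffin \<sigma> (prevf f) = Some t"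
        using i5 unfolding I5_def by blast
      ultimately show ?thesis using f1 actE pendE unfolding A_def Mv_def P_def by blast
    next
      assume "f \<in> {f \<in> new. prevf f \<in> A \<union> P}"
      then show ?thesis using actE pendE by blast
    qed
    then show "ffin \<sigma>' f = None \<and> prevf f \<in> act \<sigma>' \<union> pend \<sigma>'" using ff by blast
  qed
  have n5: "I5 \<sigma>' (Suc t)" unfolding I5_def
  proof
    fix f assume "f \<in> act \<sigma>'"
    then have "ffin \<sigma> f = None" using act_none by blast
    then show "ffin \<sigma>' f = None \<or> ffin \<sigma>' f = Some (Suc t)" using ff_in[of f] by metis
  qed
  have n10: "I10 G \<sigma>'" unfolding I10_def
  proof (intro allI impI)
    fix j j' k k' assume h: "(j,j',k') \<in> act \<sigma>' \<and> k < k' \<and> is_flow G (j,j',k)"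
    have "ffin \<sigma> (j,j',k) \<noteq> None"
    proof (cases "(j,j',k') \<in> A")
      case True then show ?thesis using i10 h unfolding I10_def A_def by blast
    next
      case False
      then have g: "(j,j',k') \<in> Mv \<union> Nw" using h actE by blast
      have k1: "1 \<le> k" using h by (simp add: is_flow_simp)
      then have k2: "2 \<le> k'" using h by linarith
      have "k \<le> k' - 1" using h by linarith
      then show ?thesis using below_fin[OF prev_fin[OF g k2]] h by blast
    qed
    then show "ffin \<sigma>' (j,j',k) \<noteq> None" using ff_keep by blast
  qed
  have n6: "I6 G \<sigma>'" unfolding I6_def
  proof (intro allI impI)
    fix j j' k k' assume h: "ffin \<sigma>' (j,j',k') \<noteq> None \<and> k < k' \<and> is_flow G (j,j',k)"
    then consider "ffin \<sigma> (j,j',k') \<noteq> None" | "(j,j',k') \<in> act \<sigma>'" using ff_new by blast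
    then show "ffin \<sigma>' (j,j',k) \<noteq> None"
    proof cases
      case 1 then show ?thesis using I6D[OF i6 1] h ff_keep by blast
    next
      case 2 then show ?thesis using n10 h unfolding I10_def by blast
    qed
  qed
  have n9: "I9 G \<sigma>'" unfolding I9_def
  proof (intro allI impI)
    fix j n k s assume h: "started \<sigma>' (j,n) = Some s \<and> 1 \<le> k \<and> k < n"
    show "\<exists>s'. started \<sigma>' (j,k) = Some s' \<and> s' + ?p j \<le> s"
    proof (cases "started \<sigma> (j,n) = Some s")
      case True then show ?thesis using I9D[OF i9 True] h st_keep by blast
    next
      case False
      then have rd: "s = Suc t" "ready G \<sigma> (Suc t) (j,n)" using st_new h by blast+
      have "n \<noteq> 1" using h by linarith
      then have "task_done_by G \<sigma> (j, n - 1) t" using rd(2) unfolding ready_def by auto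
      then obtain s1 where s1: "started \<sigma> (j,n-1) = Some s1" "s1 + ?p j \<le> Suc t"
        unfolding task_done_by_def by auto
      show ?thesis
      proof (cases "k = n - 1")
        case True then show ?thesis using s1 st_keep rd(1) by blast
      next
        case False
        then have "k < n - 1" using h by linarith
        then obtain s2 where "started \<sigma> (j,k) = Some s2" "s2 + ?p j \<le> s1"
          using I9D[OF i9 s1(1)] h by blast
        then show ?thesis using s1 st_keep rd(1) by fastforce
      qed
    qed
  qed
  have n12: "I12 G \<sigma>' (Suc t)" unfolding I12_def
  proof (intro allI impI)
    fix f assume "ffin \<sigma>' f \<noteq> None"
    then consider "ffin \<sigma> f \<noteq> None" | "f \<in> act \<sigma>'" using ff_new by blast
    then show "dn G \<sigma>' (fsrc f) (Suc t)"
    proof cases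
      case 1 then show ?thesis using i12 dn_keep unfolding I12_def by (meson le_SucI order_refl)
    next
      case 2 then show ?thesis using n2 unfolding I2_def by blast
    qed
  qed
  show ?thesis unfolding \<sigma>'_def[symmetric] INV_def
    using n1 n2 n3 n4 n5 n6 n7 n9 n10 n11 n12 by blast
qed


lemma INV_run: "wf_job G \<Longrightarrow> INV G (oes_run G T) T"
  by (induction T) (auto simp: INV_init INV_step)

lemma card_bound:
  assumes wf: "wf_job G" and i7: "I7 \<sigma>" and i1: "I1 G \<sigma>"
  shows "card {f \<in> act \<sigma>. Q (jb_place G (fst f)) (jb_place G (fst (snd f)))}
         \<le> card {(j, j'). interm G j j' \<and> Q (jb_place G j) (jb_place G j')}"
proof (rule card_inj_on_le)
  show "inj_on (\<lambda>f. (fst f, fst (snd f))) {f \<in> act \<sigma>. Q (jb_place G (fst f)) (jb_place G (fst (snd f)))}"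
    unfolding inj_on_def
  proof (intro ballI impI)
    fix f g assume "f \<in> {f \<in> act \<sigma>. Q (jb_place G (fst f)) (jb_place G (fst (snd f)))}"
      "g \<in> {f \<in> act \<sigma>. Q (jb_place G (fst f)) (jb_place G (fst (snd f)))}"
      "(fst f, fst (snd f)) = (fst g, fst (snd g))"
    then show "f = g" using I7D[OF i7] by (cases f, cases g) auto
  qed
  show "(\<lambda>f. (fst f, fst (snd f))) ` {f \<in> act \<sigma>. Q (jb_place G (fst f)) (jb_place G (fst (snd f)))}
        \<subseteq> {(j, j'). interm G j j' \<and> Q (jb_place G j) (jb_place G j')}"
  proof
    fix x assume "x \<in> (\<lambda>f. (fst f, fst (snd f))) ` {f \<in> act \<sigma>. Q (jb_place G (fst f)) (jb_place G (fst (snd f)))}"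
    then obtain j j' n where x: "x = (j,j')" "(j,j',n) \<in> act \<sigma>" "Q (jb_place G j) (jb_place G j')" by force
    then have "is_flow G (j,j',n)" using i1 unfolding I1_def by blast
    then show "x \<in> {(j, j'). interm G j j' \<and> Q (jb_place G j) (jb_place G j')}"
      using x by (simp add: is_flow_simp)
  qed
  have "{(j, j'). interm G j j' \<and> Q (jb_place G j) (jb_place G j')} \<subseteq> jb_tasks G \<times> jb_tasks G"
    by (auto simp: interm_def edge_def)
  moreover have "finite (jb_tasks G)" using wf by (simp add: wf_job_def)
  ultimately show "finite {(j, j'). interm G j j' \<and> Q (jb_place G j) (jb_place G j')}"
    using finite_subset by blast
qed

theorem lemma1:
  fixes G :: "'j job" and t m :: nat
  assumes "wf_job G"
    and "1 \<le> t"
    and "m \<in> {1..jb_M G}"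
  shows "Delta_in G t m \<le> hat_Delta_in G m \<and> Delta_out G t m \<le> hat_Delta_out G m"
proof -
  have inv: "INV G (oes_run G t) t" using INV_run[OF assms(1)] .
  then have i7: "I7 (oes_run G t)" and i1: "I1 G (oes_run G t)" by (auto simp: INV_def)
  show ?thesis
    using card_bound[OF assms(1) i7 i1, of "\<lambda>a b. b = m"] card_bound[OF assms(1) i7 i1, of "\<lambda>a b. a = m"]
    unfolding Delta_in_def Delta_out_def hat_Delta_in_def hat_Delta_out_def dst_mach_def src_mach_def
    by simp
qed

end
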